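(* Let $n\ge3$, let $S=(s_{ij})$ be an $n\times n$ magic square, and let $P=\{(x_{ij},y_{ij},z_{ij})\}$ with $x_{ij}=j-\frac{n-1}{2}$, $y_{ij}=\frac{n-1}{2}-i$, $z_{ij}=s_{ij}-\frac{n^2+1}{2}$. For $\epsilon=(\epsilon_{ij})\in\mathbb R^{n\times n}$ let $\tilde P$ be obtained by replacing $z_{ij}$ with $\tilde z_{ij}=z_{ij}+\epsilon_{ij}$, and set $\Phi(\tilde P)=\mathrm{Cov}(X,\tilde Z)^2+\mathrm{Cov}(Y,\tilde Z)^2$. Then $\Phi(P)=0$, and for generic perturbations $\epsilon$ (i.e. for all $\epsilon$ outside a Lebesgue-null subset of $\mathbb R^{n\times n}$), $\Phi(\tilde P)>0$.
   Context: A magic square of order $n$ is an arrangement of $1,\dots,n^2$ (each once) in an $n\times n$ grid with every row, column, and both main diagonals summing to $n(n^2+1)/2$. $X,Y,\tilde Z$ are the functions $(i,j)\mapsto x_{ij},y_{ij},\tilde z_{ij}$ regarded as random variables under the uniform distribution on cells, with $\mathrm{Cov}(F,G)=\frac1{n^2}\sum_{i,j}(F(i,j)-\bar F)(G(i,j)-\bar G)$. *)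

theory Defs
  imports "HOL-Probability.Probability"
begin

definition grid :: "nat \<Rightarrow> (nat \<times> nat) set" where
  "grid n = {0..<n} \<times> {0..<n}"

definition magic_square :: "nat \<Rightarrow> (nat \<Rightarrow> nat \<Rightarrow> nat) \<Rightarrow> bool" where
  "magic_square n s \<longleftrightarrow>
     bij_betw (\<lambda>(i,j). s i j) (grid n) {1..n^2} \<and>
     (\<forall>i<n. 2 * (\<Sum>j<n. s i j) = n * (n^2 + 1)) \<and>
     (\<forall>j<n. 2 * (\<Sum>i<n. s i j) = n * (n^2 + 1)) \<and>
     2 * (\<Sum>i<n. s i i) = n * (n^2 + 1) \<and>
     2 * (\<Sum>i<n. s i (n - 1 - i)) = n * (n^2 + 1)"

definition cell_mean :: "nat \<Rightarrow> (nat \<Rightarrow> nat \<Rightarrow> real) \<Rightarrow> real" where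
  "cell_mean n F = (\<Sum>(i,j)\<in>grid n. F i j) / real n ^ 2"

definition cell_cov :: "nat \<Rightarrow> (nat \<Rightarrow> nat \<Rightarrow> real) \<Rightarrow> (nat \<Rightarrow> nat \<Rightarrow> real) \<Rightarrow> real" where
  "cell_cov n F G = (\<Sum>(i,j)\<in>grid n. (F i j - cell_mean n F) * (G i j - cell_mean n G)) / real n ^ 2"

definition xcoord :: "nat \<Rightarrow> nat \<Rightarrow> nat \<Rightarrow> real" where
  "xcoord n i j = real j - (real n - 1) / 2"

definition ycoord :: "nat \<Rightarrow> nat \<Rightarrow> nat \<Rightarrow> real" where
  "ycoord n i j = (real n - 1) / 2 - real i"

definition zcoord :: "nat \<Rightarrow> (nat \<Rightarrow> nat \<Rightarrow> nat) \<Rightarrow> nat \<Rightarrow> nat \<Rightarrow> real" where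
  "zcoord n s i j = real (s i j) - (real n ^ 2 + 1) / 2"

definition zpert :: "nat \<Rightarrow> (nat \<Rightarrow> nat \<Rightarrow> nat) \<Rightarrow> (nat \<times> nat \<Rightarrow> real) \<Rightarrow> nat \<Rightarrow> nat \<Rightarrow> real" where
  "zpert n s \<epsilon> i j = zcoord n s i j + \<epsilon> (i, j)"

definition Phi :: "nat \<Rightarrow> (nat \<Rightarrow> nat \<Rightarrow> real) \<Rightarrow> real" where
  "Phi n Z = (cell_cov n (xcoord n) Z)^2 + (cell_cov n (ycoord n) Z)^2"

end

theory Submission
  imports Defs
begin

lemma AE_lin_nonzero:
  fixes w :: "'a \<Rightarrow> real"
  assumes fin: "finite I" and k: "k \<in> I" and wk: "w k \<noteq> 0"
  shows "AE \<epsilon> in PiM I (\<lambda>_. lborel). (\<Sum>p\<in>I. w p * \<epsilon> p) \<noteq> 0"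
proof -
  interpret product_sigma_finite "\<lambda>_. lborel" by standard
  define J where "J = I - {k}"
  have IJ: "I = insert k J" and kJ: "k \<notin> J" and finJ: "finite J"
    using k fin by (auto simp: J_def)
  define L where "L = (\<lambda>\<epsilon>::'a\<Rightarrow>real. \<Sum>p\<in>I. w p * \<epsilon> p)"
  have Lm: "L \<in> borel_measurable (PiM I (\<lambda>_. lborel))"
    unfolding L_def
    by (intro borel_measurable_sum borel_measurable_times borel_measurable_const)
       (auto intro: measurable_component_singleton)
  define N where "N = {\<epsilon>\<in>space (PiM I (\<lambda>_. lborel)). L \<epsilon> = 0}"
  have Nm: "N \<in> sets (PiM I (\<lambda>_. lborel))"
    unfolding N_def using Lm by measurable
  have "emeasure (PiM I (\<lambda>_. lborel)) N = (\<integral>\<^sup>+ x. indicator N x \<partial>PiM I (\<lambda>_. lborel))"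
    using Nm by simp
  also have "\<dots> = (\<integral>\<^sup>+ x. (\<integral>\<^sup>+ y. indicator N (x(k := y)) \<partial>lborel) \<partial>PiM J (\<lambda>_. lborel))"
    unfolding IJ using Nm IJ finJ kJ
    by (intro product_nn_integral_insert) auto
  also have "\<dots> = (\<integral>\<^sup>+ x. 0 \<partial>PiM J (\<lambda>_. lborel :: real measure))"
  proof (rule Nonnegative_Lebesgue_Integration.nn_integral_cong)
    fix x :: "'a \<Rightarrow> real" assume x: "x \<in> space (PiM J (\<lambda>_. lborel :: real measure))"
    define c where "c = - (\<Sum>p\<in>J. w p * x p) / w k"
    have "(\<integral>\<^sup>+ y. indicator N (x(k := y)) \<partial>lborel) \<le> (\<integral>\<^sup>+ y. indicator {c} y \<partial>lborel)"
    proof (intro nn_integral_mono)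
      fix y :: real
      have "L (x(k := y)) = w k * y + (\<Sum>p\<in>J. w p * x p)"
        unfolding L_def IJ using kJ finJ
        by (simp add: sum.insert) (intro sum.cong, auto)
      then have "x(k := y) \<in> N \<Longrightarrow> y = c"
        using wk unfolding N_def c_def by (auto simp: field_simps)
      then show "indicator N (x(k := y)) \<le> (indicator {c} y :: ennreal)"
        by (auto simp: indicator_def)
    qed
    also have "\<dots> = 0" by simp
    finally show "(\<integral>\<^sup>+ y. indicator N (x(k := y)) \<partial>lborel) = 0" by simp
  qed
  also have "\<dots> = 0" by simp
  finally have "emeasure (PiM I (\<lambda>_. lborel)) N = 0" .
  then show ?thesis
    using AE_iff_measurable[OF Nm, of "\<lambda>\<epsilon>. L \<epsilon> \<noteq> 0"] unfolding N_def L_def by auto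
qed

lemma grid_sum: "(\<Sum>p\<in>grid n. f p) = (\<Sum>i<n. \<Sum>j<n. f (i,j))"
  by (simp add: grid_def sum.cartesian_product lessThan_atLeast0)

lemma sum_real_lt: "(\<Sum>j<n. real j) = real n * (real n - 1) / 2"
  by (induction n) (auto simp: field_simps)

lemma cov_zero_mean:
  assumes "(\<Sum>(i,j)\<in>grid n. F i j) = 0"
  shows "cell_cov n F G = (\<Sum>(i,j)\<in>grid n. F i j * G i j) / real n ^ 2"
proof -
  have m: "cell_mean n F = 0" using assms by (simp add: cell_mean_def)
  have "(\<Sum>(i,j)\<in>grid n. F i j * (G i j - cell_mean n G))
      = (\<Sum>(i,j)\<in>grid n. F i j * G i j) - cell_mean n G * (\<Sum>(i,j)\<in>grid n. F i j)"
    by (simp add: case_prod_unfold algebra_simps sum_subtractf sum_distrib_left)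
  then show ?thesis using assms m by (simp add: cell_cov_def)
qed

lemma sum_c1: "(\<Sum>j<n. real j - (real n - 1)/2) = 0"
proof -
  have "(\<Sum>j<n. real j - (real n - 1)/2) = real n * (real n - 1) / 2 - real n * ((real n - 1)/2)"
    by (simp add: sum_subtractf sum_real_lt)
  then show ?thesis by simp
qed

lemma sum_c2: "(\<Sum>j<n. (real n - 1)/2 - real j) = 0"
proof -
  have "(\<Sum>j<n. (real n - 1)/2 - real j) = - (\<Sum>j<n. real j - (real n - 1)/2)"
    by (simp add: sum_negf[symmetric])
  then show ?thesis using sum_c1 by simp
qed

lemma sum_x: "(\<Sum>(i,j)\<in>grid n. xcoord n i j) = 0"
  by (simp add: grid_sum xcoord_def sum_c1)

lemma sum_y: "(\<Sum>(i,j)\<in>grid n. ycoord n i j) = 0"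
  by (simp add: grid_sum ycoord_def sum_c2 flip: sum_distrib_left)

lemma col_sum_z:
  assumes "magic_square n s" "j < n"
  shows "(\<Sum>i<n. zcoord n s i j) = 0"
proof -
  have "2 * (\<Sum>i<n. s i j) = n * (n^2 + 1)" using assms by (simp add: magic_square_def)
  then have "2 * (\<Sum>i<n. real (s i j)) = real n * (real n ^ 2 + 1)"
    by (metis (mono_tags) of_nat_1 of_nat_add of_nat_mult of_nat_numeral of_nat_power of_nat_sum)
  moreover have "(\<Sum>k<n. zcoord n s k j) = (\<Sum>k<n. real (s k j)) - real n * ((real n^2+1)/2)"
    by (simp add: zcoord_def sum_subtractf)
  moreover have "real n * ((real n^2+1)/2) = (real n + real n * real n^2)/2" by (simp add: field_simps)
  ultimately show ?thesis by linarith
qed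

lemma row_sum_z:
  assumes "magic_square n s" "i < n"
  shows "(\<Sum>j<n. zcoord n s i j) = 0"
proof -
  have "2 * (\<Sum>j<n. s i j) = n * (n^2 + 1)" using assms by (simp add: magic_square_def)
  then have "2 * (\<Sum>j<n. real (s i j)) = real n * (real n ^ 2 + 1)"
    by (metis (mono_tags) of_nat_1 of_nat_add of_nat_mult of_nat_numeral of_nat_power of_nat_sum)
  moreover have "(\<Sum>k<n. zcoord n s i k) = (\<Sum>k<n. real (s i k)) - real n * ((real n^2+1)/2)"
    by (simp add: zcoord_def sum_subtractf)
  moreover have "real n * ((real n^2+1)/2) = (real n + real n * real n^2)/2" by (simp add: field_simps)
  ultimately show ?thesis by linarith
qed

lemma xz0: assumes "magic_square n s"
  shows "(\<Sum>(i,j)\<in>grid n. xcoord n i j * zcoord n s i j) = 0"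
proof -
  have "(\<Sum>(i,j)\<in>grid n. xcoord n i j * zcoord n s i j) = (\<Sum>i<n. \<Sum>j<n. xcoord n i j * zcoord n s i j)"
    by (simp add: grid_sum)
  also have "\<dots> = (\<Sum>j<n. \<Sum>i<n. xcoord n i j * zcoord n s i j)"
    by (rule sum.swap)
  also have "\<dots> = (\<Sum>j<n. xcoord n 0 j * (\<Sum>i<n. zcoord n s i j))"
    by (simp add: sum_distrib_left xcoord_def)
  also have "\<dots> = 0" using col_sum_z[OF assms] by simp
  finally show ?thesis .
qed

lemma yz0: assumes "magic_square n s"
  shows "(\<Sum>(i,j)\<in>grid n. ycoord n i j * zcoord n s i j) = 0"
proof -
  have "(\<Sum>(i,j)\<in>grid n. ycoord n i j * zcoord n s i j) = (\<Sum>i<n. \<Sum>j<n. ycoord n i j * zcoord n s i j)"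
    by (simp add: grid_sum)
  also have "\<dots> = (\<Sum>i<n. ycoord n i 0 * (\<Sum>j<n. zcoord n s i j))"
    by (simp add: sum_distrib_left ycoord_def)
  also have "\<dots> = 0" using row_sum_z[OF assms] by simp
  finally show ?thesis .
qed

theorem mainTheorem6:
  fixes n :: nat and s :: "nat \<Rightarrow> nat \<Rightarrow> nat"
  assumes "n \<ge> 3" and "magic_square n s"
  shows "Phi n (zcoord n s) = 0 \<and>
         (AE \<epsilon> in PiM (grid n) (\<lambda>_. lborel). Phi n (zpert n s \<epsilon>) > 0)"
proof
  show "Phi n (zcoord n s) = 0"
    using xz0[OF assms(2)] yz0[OF assms(2)]
    by (simp add: Phi_def cov_zero_mean[OF sum_x] cov_zero_mean[OF sum_y])
next
  define w where "w = (\<lambda>p::nat\<times>nat. xcoord n (fst p) (snd p))"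
  have fin: "finite (grid n)" by (simp add: grid_def)
  have k: "(0, n - 1) \<in> grid n" using assms(1) by (simp add: grid_def)
  have wk: "w (0, n - 1) \<noteq> 0" using assms(1) by (simp add: w_def xcoord_def of_nat_diff)
  have AE: "AE \<epsilon> in PiM (grid n) (\<lambda>_. lborel). (\<Sum>p\<in>grid n. w p * \<epsilon> p) \<noteq> 0"
    by (rule AE_lin_nonzero[where w=w, OF fin k wk])
  show "AE \<epsilon> in PiM (grid n) (\<lambda>_. lborel). Phi n (zpert n s \<epsilon>) > 0"
  proof (rule AE_mp[OF AE], rule AE_I2, rule impI)
    fix \<epsilon> :: "nat \<times> nat \<Rightarrow> real"
    assume ne: "(\<Sum>p\<in>grid n. w p * \<epsilon> p) \<noteq> 0"
    have "(\<Sum>(i,j)\<in>grid n. xcoord n i j * zpert n s \<epsilon> i j)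
        = (\<Sum>(i,j)\<in>grid n. xcoord n i j * zcoord n s i j) + (\<Sum>p\<in>grid n. w p * \<epsilon> p)"
      by (simp add: zpert_def w_def case_prod_unfold distrib_left sum.distrib)
    then have "cell_cov n (xcoord n) (zpert n s \<epsilon>) \<noteq> 0"
      using ne xz0[OF assms(2)] assms(1) by (simp add: cov_zero_mean[OF sum_x])
    then show "Phi n (zpert n s \<epsilon>) > 0"
      by (simp add: Phi_def add_pos_nonneg)
  qed
qed

end
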